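(* Let $K=[-q\mathbf 1,q\mathbf 1]$, $\sigma\in\Sigma$, and let $G$ be the event that there exist $x\in K$ and $y\in\mathbb R^d$ with $y<x$, $-\infty<\sigma(y)\le\sigma(x)-1<\infty$, and $\mathbf H((y,0),(x,t))\ge\sigma(x)+1-\sigma(y)$. Then for $0<t<1/(2e^{d+1}\psi_K(\sigma))$, $$P^\sigma(G)\le 2e^{2(d+1)}\psi_K^2(\sigma)\,t^2.$$
   Context: Order conventions: for $x,y\in\mathbb R^d$, $x\le y$ iff $x_i\le y_i$ for all $i$, $x<y$ iff $x_i<y_i$ for all $i$; $\mathbf 1=(1,\dots,1)$; $|x|_\infty=\max_i|x_i|$; $x!=x_1x_2\cdots x_d$; $[a,b]=\{x:a\le x\le b\}$. Fix $d\ge2$. $\mathbb Z^*=\mathbb Z\cup\{\pm\infty\}$. The state space $\Sigma$ is the set of functions $\sigma:\mathbb R^d\to\mathbb Z^*$ such that (i) $x\le y$ implies $\sigma(x)\le\sigma(y)$; (ii) for every cube $[-q\mathbf 1,q\mathbf 1]$ there are finite partitions $-q=s_i^0<\dots<s_i^{m_i}=q$ of each coordinate axis such that $\sigma$ is constant on each rectangle $\prod_i[s_i^{k_i},s_i^{k_i+1})$; (iii) for every $b\in\mathbb R^d$, $\lim_{M\to\infty}\sup\{|y|_\infty^{-d/(d+1)}\sigma(y):y\le b,|y|_\infty\ge M\}=-\infty$. A rate-one Poisson point process on $\mathbb R^d\times(0,\infty)$ is given, with law $P^\sigma$ (the process started from $\sigma$); for $y\le x$, $t>0$, $\mathbf H((y,0),(x,t))$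 is the maximal number of Poisson points on a strictly increasing chain (coordinatewise order in $\mathbb R^{d+1}$) in $\{(\eta,s):y<\eta\le x,0<s\le t\}$. For $b\in\mathbb R^d$, $h\in\mathbb Z$, $y^{b,h}(\sigma)$ is the maximal point $y\le b$ such that $[y,b]$ contains $\{x\le b:\sigma(x)\ge h\}$ ($=b$ if this set is empty). With $y^h=y^{q\mathbf 1,h}(\sigma)$, $\lambda_k(\sigma)=\sup_{-\infty<h\le k-2}(q\mathbf 1-y^h)!\,(k-h)^{-(d+1)}$. $I(K,\sigma)$ and $J(K,\sigma)$ are the minimal and maximal finite values of $\sigma$ on $K$ ($I=\infty=-J$ if there are none), and $\psi_K(\sigma)=\big(\sum_{k=I(K,\sigma)+1}^{J(K,\sigma)+1}\lambda_k^2(\sigma)\big)^{1/2}$. *)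

theory Defs
  imports "HOL-Analysis.Analysis" "HOL-Probability.Probability"
begin

text \<open>The library order on real^'n is the coordinatewise
  order x \<le> y iff all x$i \<le> y$i (this is used as is). The paper's strict
  order x < y means x$i < y$i for ALL i; we name it vlt.\<close>

definition vlt :: "real^'n \<Rightarrow> real^'n \<Rightarrow> bool" where
  "vlt x y \<longleftrightarrow> (\<forall>i. x$i < y$i)"

definition linf :: "real^'n \<Rightarrow> real" where
  "linf x = (MAX i. \<bar>x$i\<bar>)"

definition vfact :: "real^'n \<Rightarrow> real" where
  "vfact x = (\<Prod>i\<in>UNIV. x$i)"

definition ones :: "real^'n" where
  "ones = (\<chi> i. 1)"

definition cube :: "real \<Rightarrow> (real^'n) set" where
  "cube q = {x. - (q *\<^sub>R ones) \<le> x \<and> x \<le> q *\<^sub>R ones}"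

text \<open>States: Z* = Z \<union> {+-\<infinity>} is modelled inside ereal.\<close>

definition StateSpace :: "(real^'n \<Rightarrow> ereal) set" where
  "StateSpace = {\<sigma>.
     (\<forall>x. \<sigma> x \<in> {\<infinity>, -\<infinity>} \<union> range (\<lambda>n::int. ereal (of_int n))) \<and>
     (\<forall>x y. x \<le> y \<longrightarrow> \<sigma> x \<le> \<sigma> y) \<and>
     (\<forall>q>0. \<exists>S :: 'n \<Rightarrow> real set.
        (\<forall>i. finite (S i) \<and> -q \<in> S i \<and> q \<in> S i \<and> S i \<subseteq> {-q..q}) \<and>
        (\<forall>x y. (\<forall>i. -q \<le> x$i \<and> x$i < q \<and> -q \<le> y$i \<and> y$i < q) \<longrightarrow>
               (\<forall>i. \<forall>s\<in>S i. s \<le> x$i \<longleftrightarrow> s \<le> y$i) \<longrightarrow> \<sigma> x = \<sigma> y)) \<and>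
     (\<forall>b. ((\<lambda>M. SUP y\<in>{y. y \<le> b \<and> linf y \<ge> M}.
              ereal (linf y powr (- real CARD('n) / (real CARD('n) + 1))) * \<sigma> y)
           \<longlongrightarrow> -\<infinity>) at_top)}"

definition ybh :: "real^'n \<Rightarrow> int \<Rightarrow> (real^'n \<Rightarrow> ereal) \<Rightarrow> real^'n" where
  "ybh b h \<sigma> =
     (let S = {x. x \<le> b \<and> \<sigma> x \<ge> ereal (of_int h)} in
      if S = {} then b
      else (GREATEST y. y \<le> b \<and> (\<forall>x\<in>S. y \<le> x \<and> x \<le> b)))"

definition lam :: "real \<Rightarrow> int \<Rightarrow> (real^'n \<Rightarrow> ereal) \<Rightarrow> real" where
  "lam q k \<sigma> = (SUP h\<in>{h::int. h \<le> k - 2}.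
      vfact (q *\<^sub>R ones - ybh (q *\<^sub>R ones) h \<sigma>) * (real_of_int (k - h)) powr (- (real CARD('n) + 1)))"

text \<open>Finite values of \<sigma> on K; I = min, J = max; \<psi>_K = 0 if there are none
  (empty sum, matching I = \<infinity> = -J).\<close>

definition finvals :: "real \<Rightarrow> (real^'n \<Rightarrow> ereal) \<Rightarrow> int set" where
  "finvals q \<sigma> = {n. \<exists>x\<in>cube q. \<sigma> x = ereal (of_int n)}"

definition psiK :: "real \<Rightarrow> (real^'n \<Rightarrow> ereal) \<Rightarrow> real" where
  "psiK q \<sigma> = (if finvals q \<sigma> = {} then 0
     else sqrt (\<Sum>k\<in>{Min (finvals q \<sigma>) + 1 .. Max (finvals q \<sigma>) + 1}. (lam q k \<sigma>)\<^sup>2))"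

definition slt :: "(real^'n) \<times> real \<Rightarrow> (real^'n) \<times> real \<Rightarrow> bool" where
  "slt a b \<longleftrightarrow> vlt (fst a) (fst b) \<and> snd a < snd b"

definition Hlp :: "((real^'n) \<times> real) set \<Rightarrow> real^'n \<Rightarrow> real^'n \<Rightarrow> real \<Rightarrow> enat" where
  "Hlp P y x t = Sup {enat (card C) | C. finite C \<and>
      C \<subseteq> P \<inter> {(\<eta>, s). vlt y \<eta> \<and> \<eta> \<le> x \<and> 0 < s \<and> s \<le> t} \<and>
      (\<forall>a\<in>C. \<forall>b\<in>C. a \<noteq> b \<longrightarrow> slt a b \<or> slt b a)}"

text \<open>A rate-one Poisson point process on R^d \<times> (0,\<infinity>), realised on a probability
  space M by the random (locally finite) point set Pts.\<close>

definition poisson_pp :: "'w measure \<Rightarrow> ('w \<Rightarrow> ((real^'n) \<times> real) set) \<Rightarrow> bool" where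
  "poisson_pp M Pts \<longleftrightarrow> prob_space M \<and>
     (\<forall>\<omega>\<in>space M. Pts \<omega> \<subseteq> {p. 0 < snd p}) \<and>
     (\<forall>A. A \<in> sets borel \<and> bounded A \<longrightarrow>
        (\<forall>\<omega>\<in>space M. finite (Pts \<omega> \<inter> A)) \<and>
        (\<lambda>\<omega>. card (Pts \<omega> \<inter> A)) \<in> measurable M (count_space UNIV)) \<and>
     (\<forall>A (k::nat). A \<in> sets borel \<and> bounded A \<and> A \<subseteq> {p. 0 < snd p} \<longrightarrow>
        measure M {\<omega>\<in>space M. card (Pts \<omega> \<inter> A) = k}
          = exp (- measure lborel A) * measure lborel A ^ k / fact k) \<and>
     (\<forall>(F :: nat \<Rightarrow> ((real^'n) \<times> real) set) n.
        (\<forall>i<n. F i \<in> sets borel \<and> bounded (F i)) \<and> disjoint_family_on F {..<n} \<longrightarrow>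
        prob_space.indep_vars M (\<lambda>_. count_space UNIV) (\<lambda>i \<omega>. card (Pts \<omega> \<inter> F i)) {..<n})"

definition eventG :: "real \<Rightarrow> (real^'n \<Rightarrow> ereal) \<Rightarrow> real \<Rightarrow> ((real^'n) \<times> real) set \<Rightarrow> bool" where
  "eventG q \<sigma> t P \<longleftrightarrow> (\<exists>x\<in>cube q. \<exists>y. vlt y x \<and>
     (\<exists>a b :: int. \<sigma> y = ereal (of_int a) \<and> \<sigma> x = ereal (of_int b) \<and> a \<le> b - 1 \<and>
        Hlp P y x t \<ge> enat (nat (b + 1 - a))))"

end

theory Submission
  imports Defs
begin


definition crd :: "'n option \<Rightarrow> (real^'n) \<times> real \<Rightarrow> real" where
  "crd j p = (case j of Some i \<Rightarrow> fst p $ i | None \<Rightarrow> snd p)"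

definition boxL :: "('n option \<Rightarrow> real) \<Rightarrow> ('n option \<Rightarrow> real) \<Rightarrow> ((real^'n) \<times> real) set" where
  "boxL lo L = {p. \<forall>j. lo j < crd j p \<and> crd j p \<le> lo j + L j}"

definition idx :: "nat \<Rightarrow> ('n option \<Rightarrow> real) \<Rightarrow> ('n option \<Rightarrow> real) \<Rightarrow> (real^'n) \<times> real \<Rightarrow> 'n option \<Rightarrow> int" where
  "idx N lo L p = (\<lambda>j. \<lceil>real N * (crd j p - lo j) / L j\<rceil>)"

definition cell :: "nat \<Rightarrow> ('n option \<Rightarrow> real) \<Rightarrow> ('n option \<Rightarrow> real) \<Rightarrow> ('n option \<Rightarrow> int) \<Rightarrow> ((real^'n) \<times> real) set" where
  "cell N lo L c = {p. \<forall>j. lo j + L j * (of_int (c j) - 1) / real N < crd j p \<and> crd j p \<le> lo j + L j * of_int (c j) / real N}"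

definition ilt :: "('n option \<Rightarrow> int) \<Rightarrow> ('n option \<Rightarrow> int) \<Rightarrow> bool" where
  "ilt c c' \<longleftrightarrow> (\<forall>j. c j < c' j)"

lemma ceil_iff_interval:
  fixes lo L x :: real and N :: nat and c :: int
  assumes "L > 0" "N > 0"
  shows "(lo + L * (of_int c - 1) / real N < x \<and> x \<le> lo + L * of_int c / real N) \<longleftrightarrow>
         \<lceil>real N * (x - lo) / L\<rceil> = c"
proof -
  have "lo + L * (of_int c - 1) / real N < x \<longleftrightarrow> of_int c - 1 < real N * (x - lo) / L"
    using assms by (simp add: field_simps)
  moreover have "x \<le> lo + L * of_int c / real N \<longleftrightarrow> real N * (x - lo) / L \<le> of_int c"
    using assms by (simp add: field_simps)
  ultimately show ?thesis by (simp add: ceiling_eq_iff)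
qed

lemma cell_iff:
  assumes "\<forall>j. L j > 0" "N > 0"
  shows "p \<in> cell N lo L c \<longleftrightarrow> idx N lo L p = c"
  using ceil_iff_interval[OF _ assms(2)] assms(1)
  unfolding cell_def idx_def by (auto simp: fun_eq_iff)

lemma idx_range:
  assumes "\<forall>j. L j > 0" "N > 0" "p \<in> boxL lo L"
  shows "idx N lo L p j \<in> {1..int N}"
proof -
  have a: "lo j < crd j p" "crd j p \<le> lo j + L j" using assms(3) by (auto simp: boxL_def)
  have L: "L j > 0" using assms by auto
  have "0 < real N * (crd j p - lo j) / L j" using a L assms(2) by simp
  hence 1: "1 \<le> \<lceil>real N * (crd j p - lo j) / L j\<rceil>" by simp
  have "real N * (crd j p - lo j) \<le> real N * L j" using a L
    by (intro mult_left_mono) auto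
  hence "real N * (crd j p - lo j) / L j \<le> real N" using L
    by (simp add: divide_le_eq mult.commute)
  hence 2: "\<lceil>real N * (crd j p - lo j) / L j\<rceil> \<le> int N" by (simp add: ceiling_le_iff)
  show ?thesis using 1 2 by (simp add: idx_def)
qed

lemma idx_box:
  assumes "\<forall>j. L j > 0" "N > 0" "\<forall>j. idx N lo L p j \<in> {1..int N}"
  shows "p \<in> boxL lo L"
proof -
  { fix j
    have L: "L j > 0" using assms by auto
    have c: "idx N lo L p j \<in> {1..int N}" using assms by auto
    have e: "lo j + L j * (of_int (idx N lo L p j) - 1) / real N < crd j p \<and> crd j p \<le> lo j + L j * of_int (idx N lo L p j) / real N"
      using ceil_iff_interval[OF L assms(2)] by (simp add: idx_def)
    have "lo j \<le> lo j + L j * (of_int (idx N lo L p j) - 1) / real N"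
      using c L by simp
    moreover have "L j * of_int (idx N lo L p j) / real N \<le> L j"
      using c L assms(2) by (simp add: divide_le_eq mult_left_mono mult.commute)
    ultimately have "lo j < crd j p \<and> crd j p \<le> lo j + L j" using e by linarith }
  thus ?thesis by (simp add: boxL_def)
qed

lemma ceil_sep_double:
  fixes a b :: real
  assumes "\<lceil>a\<rceil> < \<lceil>b\<rceil>"
  shows "\<lceil>2 * a\<rceil> < \<lceil>2 * b\<rceil>"
proof -
  have "a \<le> of_int \<lceil>a\<rceil>" by simp
  have "of_int \<lceil>a\<rceil> < b" using assms by (metis ceiling_less_iff less_ceiling_iff ceiling_le_iff le_ceiling_iff not_le) 
  have "\<lceil>2*a\<rceil> \<le> 2 * \<lceil>a\<rceil>" using \<open>a \<le> of_int \<lceil>a\<rceil>\<close> by (simp add: ceiling_le_iff)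
  moreover have "2 * \<lceil>a\<rceil> < \<lceil>2*b\<rceil>" using \<open>of_int \<lceil>a\<rceil> < b\<close> by (simp add: less_ceiling_iff)
  ultimately show ?thesis by linarith
qed

lemma ceil_sep_big:
  fixes u v :: real and N :: nat
  assumes "real N * (v - u) \<ge> 1"
  shows "\<lceil>real N * u\<rceil> < \<lceil>real N * v\<rceil>"
proof -
  have "of_int \<lceil>real N * u\<rceil> < real N * u + 1" by linarith
  also have "\<dots> \<le> real N * v" using assms by (simp add: algebra_simps)
  finally show ?thesis by (simp add: less_ceiling_iff)
qed


definition chains :: "nat \<Rightarrow> nat \<Rightarrow> ('n::finite option \<Rightarrow> int) set set" where
  "chains N n = {T. T \<subseteq> (Pi\<^sub>E UNIV (\<lambda>_. {1..int N})) \<and> card T = n \<and>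
      (\<forall>c\<in>T. \<forall>c'\<in>T. c \<noteq> c' \<longrightarrow> ilt c c' \<or> ilt c' c)}"

lemma finite_chains: "finite (chains N n :: ('n::finite option \<Rightarrow> int) set set)"
proof -
  have "chains N n \<subseteq> Pow (Pi\<^sub>E UNIV (\<lambda>_. {1..int N}))" by (auto simp: chains_def)
  moreover have "finite (Pow (Pi\<^sub>E (UNIV :: 'n option set) (\<lambda>_. {1..int N})))"
    by (intro finite_Pow_iff[THEN iffD2] finite_PiE) auto
  ultimately show ?thesis by (rule finite_subset)
qed

lemma rank_inj:
  fixes P :: "int set"
  assumes "finite P" "u \<in> P" "v \<in> P" "card {w\<in>P. w < u} = card {w\<in>P. w < v}"
  shows "u = v"
proof (rule ccontr)
  assume "u \<noteq> v"
  then consider "u < v" | "v < u" by linarith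
  thus False
  proof cases
    case 1
    have "{w\<in>P. w < u} \<subset> {w\<in>P. w < v}" using 1 assms by auto
    hence "card {w\<in>P. w < u} < card {w\<in>P. w < v}" using assms(1) by (intro psubset_card_mono) auto
    thus False using assms by simp
  next
    case 2
    have "{w\<in>P. w < v} \<subset> {w\<in>P. w < u}" using 2 assms by auto
    hence "card {w\<in>P. w < v} < card {w\<in>P. w < u}" using assms(1) by (intro psubset_card_mono) auto
    thus False using assms by simp
  qed
qed

lemma chain_inj:
  assumes "\<forall>c\<in>T. \<forall>c'\<in>T. c \<noteq> c' \<longrightarrow> ilt c c' \<or> ilt c' c"
  shows "inj_on (\<lambda>c. c j) T"
proof (rule inj_onI)
  fix c c' assume "c \<in> T" "c' \<in> T" "c j = c' j"
  thus "c = c'" using assms unfolding ilt_def by (metis less_irrefl)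
qed

lemma chains_finite_T:
  assumes "T \<in> chains N n" shows "finite T"
  using assms unfolding chains_def
  by (auto intro: finite_subset[OF _ finite_PiE[of UNIV "\<lambda>_. {1..int N}"]])

lemma chain_rank:
  assumes "\<forall>c\<in>T. \<forall>c'\<in>T. c \<noteq> c' \<longrightarrow> ilt c c' \<or> ilt c' c" "finite T" "c \<in> T"
  shows "card {v \<in> (\<lambda>c. c j) ` T. v < c j} = card {c'\<in>T. ilt c' c}"
proof -
  have inj: "inj_on (\<lambda>c. c j) T" using assms(1) by (rule chain_inj)
  have "{v \<in> (\<lambda>c. c j) ` T. v < c j} = (\<lambda>c. c j) ` {c'\<in>T. c' j < c j}" by auto
  also have "card \<dots> = card {c'\<in>T. c' j < c j}"
    by (rule card_image) (rule inj_on_subset[OF inj], auto)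
  also have "{c'\<in>T. c' j < c j} = {c'\<in>T. ilt c' c}"
  proof (intro Collect_cong conj_cong refl iffI)
    fix c' assume "c' \<in> T" "c' j < c j"
    hence "c' \<noteq> c" by auto
    hence "ilt c' c \<or> ilt c c'" using assms(1,3) \<open>c' \<in> T\<close> by blast
    thus "ilt c' c" using \<open>c' j < c j\<close> unfolding ilt_def by (metis less_asym)
  next
    fix c' assume "ilt c' c" thus "c' j < c j" by (simp add: ilt_def)
  qed
  finally show ?thesis .
qed

lemma chain_proj_inj_aux:
  assumes T: "T \<in> chains N n" and T': "T' \<in> chains N n"
    and eq: "\<forall>j. (\<lambda>c. c j) ` T = (\<lambda>c. c j) ` T'" and c: "c \<in> T"
  shows "c \<in> T'"
proof -
  have fT: "finite T" "finite T'" using T T' by (auto intro: chains_finite_T)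
  have chT: "\<forall>c\<in>T. \<forall>c'\<in>T. c \<noteq> c' \<longrightarrow> ilt c c' \<or> ilt c' c" using T by (simp add: chains_def)
  have chT': "\<forall>c\<in>T'. \<forall>c'\<in>T'. c \<noteq> c' \<longrightarrow> ilt c c' \<or> ilt c' c" using T' by (simp add: chains_def)
  have "c None \<in> (\<lambda>c. c None) ` T'" using eq c by (metis imageI)
  then obtain c'' where c'': "c'' \<in> T'" "c'' None = c None" by auto
  have r: "card {c'\<in>T'. ilt c' c''} = card {c'\<in>T. ilt c' c}"
    using chain_rank[OF chT' fT(2) c''(1), of None] chain_rank[OF chT fT(1) c, of None] eq c''(2)
    by simp
  have "c'' j = c j" for j
  proof (rule rank_inj[of "(\<lambda>c. c j) ` T"])
    show "finite ((\<lambda>c. c j) ` T)" using fT by simp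
    show "c'' j \<in> (\<lambda>c. c j) ` T" using eq c'' by (metis imageI)
    show "c j \<in> (\<lambda>c. c j) ` T" using c by simp
    show "card {w \<in> (\<lambda>c. c j) ` T. w < c'' j} = card {w \<in> (\<lambda>c. c j) ` T. w < c j}"
      using chain_rank[OF chT' fT(2) c''(1), of j] chain_rank[OF chT fT(1) c, of j] eq r
      by simp
  qed
  hence "c'' = c" by auto
  thus ?thesis using c'' by simp
qed

lemma card_chains: "card (chains N n :: ('n::finite option \<Rightarrow> int) set set) \<le> (N choose n) ^ CARD('n option)"
proof -
  let ?Q = "{P. P \<subseteq> {1..int N} \<and> card P = n}"
  let ?F = "\<lambda>T::('n option \<Rightarrow> int) set. (\<lambda>j. (\<lambda>c. c j) ` T)"
  have inj: "inj_on ?F (chains N n)"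
  proof (rule inj_onI)
    fix T T' assume a: "T \<in> chains N n" "T' \<in> chains N n" "?F T = ?F T'"
    hence eq: "\<forall>j. (\<lambda>c. c j) ` T = (\<lambda>c. c j) ` T'" by (simp add: fun_eq_iff)
    show "T = T'"
      using chain_proj_inj_aux[OF a(1,2) eq] chain_proj_inj_aux[OF a(2,1)] eq by blast
  qed
  have sub: "?F ` chains N n \<subseteq> Pi\<^sub>E UNIV (\<lambda>_. ?Q)"
  proof
    fix x assume "x \<in> ?F ` chains N n"
    then obtain T where T: "T \<in> chains N n" "x = ?F T" by auto
    have chT: "\<forall>c\<in>T. \<forall>c'\<in>T. c \<noteq> c' \<longrightarrow> ilt c c' \<or> ilt c' c" using T by (simp add: chains_def)
    have injj: "inj_on (\<lambda>c. c j) T" for j using chT by (rule chain_inj)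
    have "(\<lambda>c. c j) ` T \<subseteq> {1..int N}" for j using T by (auto simp: chains_def PiE_iff)
    moreover have "card ((\<lambda>c. c j) ` T) = n" for j using T card_image[OF injj] by (simp add: chains_def)
    ultimately show "x \<in> Pi\<^sub>E UNIV (\<lambda>_. ?Q)" using T by auto
  qed
  have "card (chains N n :: ('n option \<Rightarrow> int) set set) = card (?F ` chains N n)" using card_image[OF inj] by simp
  also have "\<dots> \<le> card (Pi\<^sub>E (UNIV :: 'n option set) (\<lambda>_. ?Q))"
    by (rule card_mono[OF _ sub]) (intro finite_PiE, auto)
  also have "\<dots> = (\<Prod>j\<in>(UNIV :: 'n option set). card ?Q)" by (simp add: card_PiE)
  also have "card ?Q = N choose n" using n_subsets[of "{1..int N}" n] by simp
  finally show ?thesis by simp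
qed


definition Bsem :: "('w \<Rightarrow> ((real^'n) \<times> real) set) \<Rightarrow> nat \<Rightarrow> ('n option \<Rightarrow> real) \<Rightarrow> ('n option \<Rightarrow> real) \<Rightarrow> nat \<Rightarrow> 'w \<Rightarrow> bool" where
  "Bsem Pts N lo L n \<omega> \<longleftrightarrow> (\<exists>C. finite C \<and> C \<subseteq> Pts \<omega> \<inter> boxL lo L \<and> card C = n \<and>
     (\<forall>p\<in>C. \<forall>p'\<in>C. p \<noteq> p' \<longrightarrow> ilt (idx N lo L p) (idx N lo L p') \<or> ilt (idx N lo L p') (idx N lo L p)))"

lemma Bsem_eq:
  assumes L: "\<forall>j. L j > 0" and N: "N > 0"
  shows "Bsem Pts N lo L n \<omega> \<longleftrightarrow> (\<exists>T\<in>chains N n. \<forall>c\<in>T. Pts \<omega> \<inter> cell N lo L c \<noteq> {})"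
proof
  assume "Bsem Pts N lo L n \<omega>"
  then obtain C where C: "finite C" "C \<subseteq> Pts \<omega> \<inter> boxL lo L" "card C = n"
    "\<forall>p\<in>C. \<forall>p'\<in>C. p \<noteq> p' \<longrightarrow> ilt (idx N lo L p) (idx N lo L p') \<or> ilt (idx N lo L p') (idx N lo L p)"
    unfolding Bsem_def by blast
  let ?T = "idx N lo L ` C"
  have inj: "inj_on (idx N lo L) C"
  proof (rule inj_onI)
    fix p p' assume "p \<in> C" "p' \<in> C" "idx N lo L p = idx N lo L p'"
    thus "p = p'" using C(4) unfolding ilt_def by (metis less_irrefl)
  qed
  have "?T \<in> chains N n"
    unfolding chains_def
  proof (intro CollectI conjI)
    show "?T \<subseteq> Pi\<^sub>E UNIV (\<lambda>_. {1..int N})"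
      using idx_range[OF L N] C(2) by (auto simp: PiE_iff)
    show "card ?T = n" using card_image[OF inj] C(3) by simp
    show "\<forall>c\<in>?T. \<forall>c'\<in>?T. c \<noteq> c' \<longrightarrow> ilt c c' \<or> ilt c' c" using C(4) by auto
  qed
  moreover have "\<forall>c\<in>?T. Pts \<omega> \<inter> cell N lo L c \<noteq> {}"
    using C(2) cell_iff[OF L N] by blast
  ultimately show "\<exists>T\<in>chains N n. \<forall>c\<in>T. Pts \<omega> \<inter> cell N lo L c \<noteq> {}" by blast
next
  assume "\<exists>T\<in>chains N n. \<forall>c\<in>T. Pts \<omega> \<inter> cell N lo L c \<noteq> {}"
  then obtain T where T: "T \<in> chains N n" "\<forall>c\<in>T. Pts \<omega> \<inter> cell N lo L c \<noteq> {}" by blast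
  define pk where "pk c = (SOME p. p \<in> Pts \<omega> \<inter> cell N lo L c)" for c
  have pk: "pk c \<in> Pts \<omega> \<inter> cell N lo L c" if "c \<in> T" for c
    unfolding pk_def using T(2) that by (metis all_not_in_conv someI_ex)
  have ipk: "idx N lo L (pk c) = c" if "c \<in> T" for c
    using pk[OF that] cell_iff[OF L N] by blast
  have inj: "inj_on pk T" by (metis inj_onI ipk)
  have fT: "finite T" using T(1) by (rule chains_finite_T)
  have Tr: "T \<subseteq> Pi\<^sub>E UNIV (\<lambda>_. {1..int N})" "card T = n"
    "\<forall>c\<in>T. \<forall>c'\<in>T. c \<noteq> c' \<longrightarrow> ilt c c' \<or> ilt c' c" using T(1) by (auto simp: chains_def)
  show "Bsem Pts N lo L n \<omega>" unfolding Bsem_def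
  proof (intro exI[of _ "pk ` T"] conjI)
    show "finite (pk ` T)" using fT by simp
    show "pk ` T \<subseteq> Pts \<omega> \<inter> boxL lo L"
    proof
      fix p assume "p \<in> pk ` T"
      then obtain c where c: "c \<in> T" "p = pk c" by auto
      have "\<forall>j. idx N lo L p j \<in> {1..int N}" using ipk[OF c(1)] c Tr(1) by (auto simp: PiE_iff)
      thus "p \<in> Pts \<omega> \<inter> boxL lo L" using idx_box[OF L N] pk[OF c(1)] c(2) by auto
    qed
    show "card (pk ` T) = n" using card_image[OF inj] Tr(2) by simp
    show "\<forall>p\<in>pk ` T. \<forall>p'\<in>pk ` T. p \<noteq> p' \<longrightarrow> ilt (idx N lo L p) (idx N lo L p') \<or> ilt (idx N lo L p') (idx N lo L p)"
      using Tr(3) ipk by auto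
  qed
qed


lemma crd_cont: "continuous_on UNIV (crd j)"
  by (cases j) (auto simp: crd_def intro!: continuous_intros)

lemma cell_borel: "cell N lo L c \<in> sets borel"
proof -
  have eq: "cell N lo L c = (\<Inter>j\<in>UNIV. {p. lo j + L j * (of_int (c j) - 1) / real N < crd j p} \<inter> {p. crd j p \<le> lo j + L j * of_int (c j) / real N})"
    by (auto simp: cell_def)
  have "{p. lo j + L j * (of_int (c j) - 1) / real N < crd j p} \<in> sets borel" for j
    by (intro borel_open open_Collect_less crd_cont continuous_intros)
  moreover have "{p. crd j p \<le> lo j + L j * of_int (c j) / real N} \<in> sets borel" for j
    by (intro borel_closed closed_Collect_le crd_cont continuous_intros)
  ultimately show ?thesis unfolding eq by (intro sets.finite_INT) auto
qed

lemma prod_option_UNIV: "(\<Prod>j\<in>(UNIV::'a::finite option set). f j) = (\<Prod>i\<in>UNIV. f (Some i)) * f None"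
proof -
  have "(\<Prod>j\<in>(UNIV::'a option set). f j) = (\<Prod>j\<in>insert None (range Some). f j)"
    by (simp add: UNIV_option_conv)
  also have "\<dots> = f None * (\<Prod>j\<in>range Some. f j)" by (subst prod.insert) auto
  also have "(\<Prod>j\<in>range Some. f j) = (\<Prod>i\<in>UNIV. f (Some i))" by (subst prod.reindex) auto
  finally show ?thesis by (simp add: mult.commute)
qed

lemma cell_sub_cbox:
  fixes lo L :: "'n::finite option \<Rightarrow> real" and c and N :: nat
  defines "Av \<equiv> (\<chi> i. lo (Some i) + L (Some i) * (of_int (c (Some i)) - 1) / real N)"
    and "Bv \<equiv> (\<chi> i. lo (Some i) + L (Some i) * of_int (c (Some i)) / real N)"
    and "a0 \<equiv> lo None + L None * (of_int (c None) - 1) / real N"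
    and "b0 \<equiv> lo None + L None * of_int (c None) / real N"
  shows "cell N lo L c \<subseteq> cbox (Av, a0) (Bv, b0)"
    and "(\<forall>j. L j > 0) \<Longrightarrow> N > 0 \<Longrightarrow> measure lborel (cbox (Av, a0) (Bv, b0)) = (\<Prod>j\<in>UNIV. L j / real N)"
proof -
  show "cell N lo L c \<subseteq> cbox (Av, a0) (Bv, b0)"
  proof
    fix p assume p: "p \<in> cell N lo L c"
    obtain x s where ps: "p = (x, s)" by (cases p)
    have "\<forall>j. lo j + L j * (of_int (c j) - 1) / real N < crd j p \<and> crd j p \<le> lo j + L j * of_int (c j) / real N"
      using p by (simp add: cell_def)
    note h = this
    have "Av $ i \<le> x $ i \<and> x $ i \<le> Bv $ i" for i
      using h[rule_format, of "Some i"] by (simp add: Av_def Bv_def ps crd_def)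
    moreover have "a0 \<le> s \<and> s \<le> b0"
      using h[rule_format, of None] by (simp add: a0_def b0_def ps crd_def)
    ultimately have "\<forall>i. Av $ i \<le> x $ i \<and> x $ i \<le> Bv $ i" "a0 \<le> s \<and> s \<le> b0" by auto
    thus "p \<in> cbox (Av, a0) (Bv, b0)" by (simp add: ps cbox_Pair_eq mem_box_cart)
  qed
  assume L: "\<forall>j. L j > 0" and N: "N > 0"
  have le: "Av \<le> Bv" "a0 \<le> b0" using L N
    by (auto simp: Av_def Bv_def a0_def b0_def less_eq_vec_def divide_right_mono mult_left_mono)
  have "Av \<in> cbox Av Bv" using le(1) by (simp add: mem_box_cart less_eq_vec_def)
  hence ne: "cbox Av Bv \<noteq> {}" by blast
  have "measure lborel (cbox (Av, a0) (Bv, b0)) = measure lborel (cbox Av Bv) * measure lborel (cbox a0 b0)"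
    by (rule content_Pair)
  also have "measure lborel (cbox Av Bv) = (\<Prod>i\<in>UNIV. Bv $ i - Av $ i)" by (rule content_cbox_cart[OF ne])
  also have "(\<Prod>i\<in>UNIV. Bv $ i - Av $ i) = (\<Prod>i\<in>UNIV. L (Some i) / real N)"
    using N by (intro prod.cong refl) (simp add: Av_def Bv_def field_simps)
  also have "measure lborel (cbox a0 b0) = b0 - a0" using le(2) by (simp add: content_real)
  also have "b0 - a0 = L None / real N" using N by (simp add: a0_def b0_def field_simps)
  finally show "measure lborel (cbox (Av, a0) (Bv, b0)) = (\<Prod>j\<in>UNIV. L j / real N)"
    by (simp add: prod_option_UNIV)
qed

lemma cell_measure:
  assumes "\<forall>j. L j > 0" "N > 0"
  shows "measure lborel (cell N lo L c) \<le> (\<Prod>j\<in>UNIV. L j / real N)"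
proof -
  obtain a b where ab: "cell N lo L c \<subseteq> cbox a b" "measure lborel (cbox a b) = (\<Prod>j\<in>UNIV. L j / real N)"
    using cell_sub_cbox[where N=N and lo=lo and L=L and c=c] assms by blast
  have "measure lborel (cell N lo L c) \<le> measure lborel (cbox a b)"
    by (rule measure_mono_fmeasurable[OF ab(1)]) (auto simp: cell_borel)
  thus ?thesis using ab(2) by simp
qed

lemma cell_bounded: "bounded (cell N lo L c)"
  by (rule bounded_subset[OF bounded_cbox cell_sub_cbox(1)])

lemma cell_pos:
  assumes "lo None \<ge> 0" "L None > 0" "c None \<ge> 1" "N > 0"
  shows "cell N lo L c \<subseteq> {p. 0 < snd p}"
proof
  fix p assume "p \<in> cell N lo L c"
  hence "lo None + L None * (of_int (c None) - 1) / real N < crd None p" by (simp add: cell_def)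
  moreover have "0 \<le> L None * (of_int (c None) - 1) / real N" using assms by simp
  ultimately show "p \<in> {p. 0 < snd p}" using assms(1) by (simp add: crd_def)
qed

lemma cell_disj:
  assumes "\<forall>j. L j > 0" "N > 0" "ilt c c'"
  shows "cell N lo L c \<inter> cell N lo L c' = {}"
proof -
  have "c \<noteq> c'" using assms(3) by (auto simp: ilt_def)
  thus ?thesis by (auto simp add: cell_iff[OF assms(1,2)])
qed


lemma chain_prob:
  fixes Pts :: "'w \<Rightarrow> ((real^'n) \<times> real) set" and M :: "'w measure"
  assumes pp: "poisson_pp M Pts" and L: "\<forall>j. L j > 0" and N: "N > 0" and n: "n > 0"
    and lo0: "lo None \<ge> 0"
  shows "{\<omega>\<in>space M. Bsem Pts N lo L n \<omega>} \<in> sets M \<and>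
         measure M {\<omega>\<in>space M. Bsem Pts N lo L n \<omega>} \<le> (\<Prod>j\<in>UNIV. L j ^ n / fact n)"
proof -
  have ps: "prob_space M" using pp by (simp add: poisson_pp_def)
  interpret prob_space M by (rule ps)
  have pp3: "\<And>A. A \<in> sets borel \<Longrightarrow> bounded A \<Longrightarrow> (\<forall>\<omega>\<in>space M. finite (Pts \<omega> \<inter> A)) \<and>
      (\<lambda>\<omega>. card (Pts \<omega> \<inter> A)) \<in> measurable M (count_space UNIV)"
    using pp by (simp add: poisson_pp_def)
  have pp4: "\<And>A k. A \<in> sets borel \<Longrightarrow> bounded A \<Longrightarrow> A \<subseteq> {p. 0 < snd p} \<Longrightarrow>
        measure M {\<omega>\<in>space M. card (Pts \<omega> \<inter> A) = k}
          = exp (- measure lborel A) * measure lborel A ^ k / fact k"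
    using pp by (simp add: poisson_pp_def)
  have pp5: "\<And>(F :: nat \<Rightarrow> ((real^'n) \<times> real) set) n.
        (\<forall>i<n. F i \<in> sets borel \<and> bounded (F i)) \<Longrightarrow> disjoint_family_on F {..<n} \<Longrightarrow>
        indep_vars (\<lambda>_. count_space UNIV) (\<lambda>i \<omega>. card (Pts \<omega> \<inter> F i)) {..<n}"
    using pp by (simp add: poisson_pp_def)
  define w where "w = (\<Prod>j\<in>UNIV. L j / real N)"
  define Ev where "Ev c = {\<omega>\<in>space M. Pts \<omega> \<inter> cell N lo L c \<noteq> {}}" for c
  have Ev_eq: "Ev c = (\<lambda>\<omega>. card (Pts \<omega> \<inter> cell N lo L c)) -` {1..} \<inter> space M" for c
  proof -
    have "\<forall>\<omega>\<in>space M. finite (Pts \<omega> \<inter> cell N lo L c)" using pp3[OF cell_borel cell_bounded] by blast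
    thus ?thesis unfolding Ev_def by (auto simp: card_gt_0_iff Suc_le_eq)
  qed
  have Ev_sets: "Ev c \<in> events" for c
    unfolding Ev_eq using pp3[OF cell_borel cell_bounded] by (intro measurable_sets) auto
  have Ev_prob: "prob (Ev c) \<le> w" if c: "c \<in> Pi\<^sub>E UNIV (\<lambda>_. {1..int N})" for c
  proof -
    let ?A = "cell N lo L c"
    have cpos: "?A \<subseteq> {p. 0 < snd p}" using c L N lo0 by (intro cell_pos) (auto simp: PiE_iff)
    have z: "{\<omega>\<in>space M. card (Pts \<omega> \<inter> ?A) = 0} = space M - Ev c"
      using pp3[OF cell_borel cell_bounded] unfolding Ev_def by auto
    have "prob (space M - Ev c) = exp (- measure lborel ?A)"
      using pp4[OF cell_borel cell_bounded cpos, of 0] z by simp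
    hence "prob (Ev c) = 1 - exp (- measure lborel ?A)"
      using prob_compl[OF Ev_sets[of c]] by simp
    also have "\<dots> \<le> measure lborel ?A" using exp_ge_add_one_self[of "- measure lborel ?A"] by simp
    also have "\<dots> \<le> w" unfolding w_def by (rule cell_measure[OF L N])
    finally show ?thesis .
  qed
  have Seq: "{\<omega>\<in>space M. Bsem Pts N lo L n \<omega>} = (\<Union>T\<in>chains N n. \<Inter>c\<in>T. Ev c)"
  proof -
    have ne: "T \<noteq> {}" if "T \<in> chains N n" for T using that n by (auto simp: chains_def)
    show ?thesis
      unfolding Bsem_eq[OF L N] Ev_def using ne by blast
  qed
  have Tsets: "(\<Inter>c\<in>T. Ev c) \<in> events" if "T \<in> chains N n" for T
  proof -
    have "finite T" "T \<noteq> {}" using that n chains_finite_T[OF that] by (auto simp: chains_def)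
    thus ?thesis using Ev_sets by (intro sets.finite_INT) auto
  qed
  have Sset: "{\<omega>\<in>space M. Bsem Pts N lo L n \<omega>} \<in> events"
    unfolding Seq using Tsets finite_chains by (intro sets.finite_UN) auto
  have Tprob: "prob (\<Inter>c\<in>T. Ev c) \<le> w ^ n" if T: "T \<in> chains N n" for T
  proof -
    have fT: "finite T" using chains_finite_T[OF T] .
    have Tr: "T \<subseteq> Pi\<^sub>E UNIV (\<lambda>_. {1..int N})" "card T = n"
      "\<forall>c\<in>T. \<forall>c'\<in>T. c \<noteq> c' \<longrightarrow> ilt c c' \<or> ilt c' c" using T by (auto simp: chains_def)
    obtain e where e: "bij_betw e {0..<n} T" using ex_bij_betw_nat_finite[OF fT] Tr(2) by auto
    have e': "bij_betw e {..<n} T" using e by (simp add: lessThan_atLeast0)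
    define F where "F i = cell N lo L (e i)" for i
    have disj: "disjoint_family_on F {..<n}"
      unfolding disjoint_family_on_def
    proof (intro ballI impI)
      fix i j assume ij: "i \<in> {..<n}" "j \<in> {..<n}" "i \<noteq> j"
      have "e i \<noteq> e j" using e' ij by (metis bij_betw_iff_bijections)
      moreover have "e i \<in> T" "e j \<in> T" using e' ij by (auto simp: bij_betw_def)
      ultimately have "ilt (e i) (e j) \<or> ilt (e j) (e i)" using Tr(3) by blast
      thus "F i \<inter> F j = {}" unfolding F_def using cell_disj[OF L N] by blast
    qed
    have ind: "indep_vars (\<lambda>_. count_space UNIV) (\<lambda>i \<omega>. card (Pts \<omega> \<inter> F i)) {..<n}"
      using pp5[OF _ disj] by (simp add: F_def cell_borel cell_bounded)
    hence isets: "indep_sets (\<lambda>i. {(\<lambda>\<omega>. card (Pts \<omega> \<inter> F i)) -` A \<inter> space M | A. A \<in> sets (count_space UNIV)}) {..<n}"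
      unfolding indep_vars_def2 by simp
    have "prob (\<Inter>i\<in>{..<n}. Ev (e i)) = (\<Prod>i\<in>{..<n}. prob (Ev (e i)))"
      using n by (intro indep_setsD[OF isets]) (auto simp: Ev_eq F_def)
    moreover have "(\<Inter>i\<in>{..<n}. Ev (e i)) = (\<Inter>c\<in>T. Ev c)"
      using e' by (auto simp: bij_betw_def)
    moreover have "(\<Prod>i\<in>{..<n}. prob (Ev (e i))) \<le> (\<Prod>i\<in>{..<n}. w)"
    proof (intro prod_mono conjI)
      fix i assume "i \<in> {..<n}"
      hence "e i \<in> T" using e' by (auto simp: bij_betw_def)
      thus "prob (Ev (e i)) \<le> w" using Ev_prob Tr(1) by blast
    qed auto
    ultimately show ?thesis by simp
  qed
  have "prob {\<omega>\<in>space M. Bsem Pts N lo L n \<omega>} \<le> (\<Sum>T\<in>chains N n. prob (\<Inter>c\<in>T. Ev c))"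
    unfolding Seq using Tsets finite_chains by (intro finite_measure_subadditive_finite) auto
  also have "\<dots> \<le> (\<Sum>T\<in>(chains N n :: (('n option \<Rightarrow> int) set set)). w ^ n)" using Tprob by (intro sum_mono) auto
  also have "\<dots> = real (card (chains N n :: ('n option \<Rightarrow> int) set set)) * w ^ n" by simp
  also have "\<dots> \<le> real ((N choose n) ^ CARD('n option)) * w ^ n"
  proof -
    have cc: "card (chains N n :: ('n option \<Rightarrow> int) set set) \<le> (N choose n) ^ CARD('n option)"
      by (rule card_chains)
    have w0: "0 \<le> w" unfolding w_def using L by (intro prod_nonneg) (simp add: less_imp_le)
    show ?thesis using cc w0 by (intro mult_right_mono zero_le_power) (simp_all only: of_nat_le_iff)
  qed
  also have "\<dots> = (\<Prod>j\<in>UNIV. real (N choose n) * (L j / real N) ^ n)"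
    by (simp add: w_def prod.distrib prod_power_distrib prod_constant)
  also have "\<dots> \<le> (\<Prod>j\<in>UNIV. L j ^ n / fact n)"
  proof (intro prod_mono conjI)
    fix j :: "'n option"
    have Lj: "L j > 0" using L by auto
    show "0 \<le> real (N choose n) * (L j / real N) ^ n" using Lj by simp
    have b: "real (N choose n) * fact n \<le> real N ^ n"
      using binomial_fact_pow[of N n] by (metis of_nat_fact of_nat_le_iff of_nat_mult of_nat_power)
    have "real (N choose n) * (L j / real N) ^ n = real (N choose n) * fact n * (L j ^ n / real N ^ n) / fact n"
      by (simp add: power_divide)
    also have "\<dots> \<le> real N ^ n * (L j ^ n / real N ^ n) / fact n"
      using Lj by (intro divide_right_mono mult_right_mono b) auto
    also have "\<dots> = L j ^ n / fact n" using N by simp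
    finally show "real (N choose n) * (L j / real N) ^ n \<le> L j ^ n / fact n" .
  qed
  finally show ?thesis using Sset by simp
qed


lemma idx_double: "idx (2 * N) lo L p j = \<lceil>2 * (real N * (crd j p - lo j) / L j)\<rceil>"
  by (simp add: idx_def mult.assoc)

lemma Bsem_mono:
  assumes "Bsem Pts N lo L n \<omega>"
  shows "Bsem Pts (2 * N) lo L n \<omega>"
proof -
  obtain C where C: "finite C" "C \<subseteq> Pts \<omega> \<inter> boxL lo L" "card C = n"
    "\<forall>p\<in>C. \<forall>p'\<in>C. p \<noteq> p' \<longrightarrow> ilt (idx N lo L p) (idx N lo L p') \<or> ilt (idx N lo L p') (idx N lo L p)"
    using assms unfolding Bsem_def by blast
  have imp: "ilt (idx (2*N) lo L p) (idx (2*N) lo L p')" if a: "ilt (idx N lo L p) (idx N lo L p')" for p p'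
    unfolding ilt_def
  proof
    fix j
    have "\<lceil>real N*(crd j p - lo j)/L j\<rceil> < \<lceil>real N*(crd j p' - lo j)/L j\<rceil>"
      using a by (simp add: ilt_def idx_def)
    from ceil_sep_double[OF this] show "idx (2*N) lo L p j < idx (2*N) lo L p' j"
      by (simp only: idx_double)
  qed
  show ?thesis unfolding Bsem_def
    using C imp by (intro exI[of _ C]) blast
qed

lemma Bsem_mono_pow: "incseq (\<lambda>m. {\<omega>\<in>space M. Bsem Pts (2^m) lo L n \<omega>})"
  by (rule incseq_SucI) (auto simp: Bsem_mono)

lemma Bsem_exists:
  assumes L: "\<forall>j. L j > 0" and C: "finite C" "C \<subseteq> Pts \<omega> \<inter> boxL lo L" "card C = n"
    and ch: "\<forall>p\<in>C. \<forall>p'\<in>C. p \<noteq> p' \<longrightarrow> (\<forall>j. crd j p < crd j p') \<or> (\<forall>j. crd j p' < crd j p)"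
  shows "\<exists>m. Bsem Pts (2^m) lo L n \<omega>"
proof -
  define u where "u j p = (crd j p - lo j) / L j" for j p
  have idxu: "idx N lo L p j = \<lceil>real N * u j p\<rceil>" for N p j by (simp add: idx_def u_def)
  have ev: "\<forall>y\<in>C \<times> C \<times> (UNIV :: 'a option set). eventually (\<lambda>N. crd (snd (snd y)) (fst y) < crd (snd (snd y)) (fst (snd y)) \<longrightarrow>
      \<lceil>real N * u (snd (snd y)) (fst y)\<rceil> < \<lceil>real N * u (snd (snd y)) (fst (snd y))\<rceil>) sequentially"
  proof
    fix y :: "_ \<times> _ \<times> 'a option" assume "y \<in> C \<times> C \<times> UNIV"
    obtain p p' j where y: "y = (p, p', j)" by (cases y) auto
    show "eventually (\<lambda>N. crd (snd (snd y)) (fst y) < crd (snd (snd y)) (fst (snd y)) \<longrightarrow>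
      \<lceil>real N * u (snd (snd y)) (fst y)\<rceil> < \<lceil>real N * u (snd (snd y)) (fst (snd y))\<rceil>) sequentially"
    proof (cases "crd j p < crd j p'")
      case True
      have Lj: "L j > 0" using L by auto
      have d: "u j p' - u j p > 0" using True Lj by (simp add: u_def divide_strict_right_mono)
      have "eventually (\<lambda>N. N \<ge> nat \<lceil>1 / (u j p' - u j p)\<rceil>) sequentially" by (rule eventually_ge_at_top)
      thus ?thesis
      proof (rule eventually_mono)
        fix N :: nat assume "N \<ge> nat \<lceil>1 / (u j p' - u j p)\<rceil>"
        hence "real N \<ge> 1 / (u j p' - u j p)" by linarith
        hence "real N * (u j p' - u j p) \<ge> 1" using d by (simp add: field_simps)
        thus "crd (snd (snd y)) (fst y) < crd (snd (snd y)) (fst (snd y)) \<longrightarrow>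
          \<lceil>real N * u (snd (snd y)) (fst y)\<rceil> < \<lceil>real N * u (snd (snd y)) (fst (snd y))\<rceil>"
          using ceil_sep_big[where N=N and u="u j p" and v="u j p'"] by (simp add: y)
      qed
    next
      case False
      thus ?thesis by (simp add: y)
    qed
  qed
  have "eventually (\<lambda>N. \<forall>y\<in>C \<times> C \<times> (UNIV :: 'a option set). crd (snd (snd y)) (fst y) < crd (snd (snd y)) (fst (snd y)) \<longrightarrow>
      \<lceil>real N * u (snd (snd y)) (fst y)\<rceil> < \<lceil>real N * u (snd (snd y)) (fst (snd y))\<rceil>) sequentially"
    by (rule eventually_ball_finite) (use C(1) ev in auto)
  then obtain N0 where N0: "\<And>N. N \<ge> N0 \<Longrightarrow> \<forall>y\<in>C \<times> C \<times> (UNIV :: 'a option set). crd (snd (snd y)) (fst y) < crd (snd (snd y)) (fst (snd y)) \<longrightarrow>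
      \<lceil>real N * u (snd (snd y)) (fst y)\<rceil> < \<lceil>real N * u (snd (snd y)) (fst (snd y))\<rceil>"
    unfolding eventually_sequentially by blast
  have "(2::nat) ^ N0 \<ge> N0" by (simp add: less_imp_le)
  note N1 = N0[OF this]
  have "ilt (idx (2^N0) lo L p) (idx (2^N0) lo L p')" if "p \<in> C" "p' \<in> C" "\<forall>j. crd j p < crd j p'" for p p'
    unfolding ilt_def idxu using N1 that by fastforce
  hence "Bsem Pts (2^N0) lo L n \<omega>" unfolding Bsem_def using C ch by (intro exI[of _ C]) blast
  thus ?thesis by blast
qed

lemma union_prob:
  fixes Pts :: "'w \<Rightarrow> ((real^'n) \<times> real) set" and M :: "'w measure"
  assumes pp: "poisson_pp M Pts" and L: "\<forall>j. L j > 0" and n: "n > 0"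
    and lo0: "lo None \<ge> 0"
  shows "(\<Union>m. {\<omega>\<in>space M. Bsem Pts (2^m) lo L n \<omega>}) \<in> sets M \<and>
         measure M (\<Union>m. {\<omega>\<in>space M. Bsem Pts (2^m) lo L n \<omega>}) \<le> (\<Prod>j\<in>UNIV. L j ^ n / fact n)"
proof -
  have ps: "prob_space M" using pp by (simp add: poisson_pp_def)
  interpret prob_space M by (rule ps)
  have cp: "{\<omega>\<in>space M. Bsem Pts (2^m) lo L n \<omega>} \<in> sets M \<and>
         measure M {\<omega>\<in>space M. Bsem Pts (2^m) lo L n \<omega>} \<le> (\<Prod>j\<in>UNIV. L j ^ n / fact n)" for m
    using chain_prob[where M=M and Pts=Pts and L=L and N="2^m" and n=n and lo=lo] pp L n lo0 by simp
  have rs: "range (\<lambda>m. {\<omega>\<in>space M. Bsem Pts (2^m) lo L n \<omega>}) \<subseteq> sets M" using cp by auto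
  have lim: "(\<lambda>m. measure M {\<omega>\<in>space M. Bsem Pts (2^m) lo L n \<omega>}) \<longlonglongrightarrow> measure M (\<Union>m. {\<omega>\<in>space M. Bsem Pts (2^m) lo L n \<omega>})"
    by (rule finite_Lim_measure_incseq[OF rs Bsem_mono_pow])
  have "measure M (\<Union>m. {\<omega>\<in>space M. Bsem Pts (2^m) lo L n \<omega>}) \<le> (\<Prod>j\<in>UNIV. L j ^ n / fact n)"
    by (rule LIMSEQ_le_const2[OF lim]) (use cp in auto)
  moreover have "(\<Union>m. {\<omega>\<in>space M. Bsem Pts (2^m) lo L n \<omega>}) \<in> sets M" using rs by auto
  ultimately show ?thesis by simp
qed


lemma cube_iff: "x \<in> cube q \<longleftrightarrow> (\<forall>i. -q \<le> x$i \<and> x$i \<le> q)"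
  by (auto simp: cube_def ones_def less_eq_vec_def)

lemma finite_finvals:
  fixes \<sigma> :: "real^'n \<Rightarrow> ereal"
  assumes "\<sigma> \<in> StateSpace" "q > 0"
  shows "finite (finvals q \<sigma>)"
proof -
  have "\<forall>q>0. \<exists>S :: 'n \<Rightarrow> real set.
        (\<forall>i. finite (S i) \<and> -q \<in> S i \<and> q \<in> S i \<and> S i \<subseteq> {-q..q}) \<and>
        (\<forall>x y. (\<forall>i. -q \<le> x$i \<and> x$i < q \<and> -q \<le> y$i \<and> y$i < q) \<longrightarrow>
               (\<forall>i. \<forall>s\<in>S i. s \<le> x$i \<longleftrightarrow> s \<le> y$i) \<longrightarrow> \<sigma> x = \<sigma> y)"
    using assms(1) unfolding StateSpace_def by blast
  then obtain S :: "'n \<Rightarrow> real set" where S: "\<forall>i. finite (S i)"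
    "\<forall>x y. (\<forall>i. -(q+1) \<le> x$i \<and> x$i < q+1 \<and> -(q+1) \<le> y$i \<and> y$i < q+1) \<longrightarrow>
               (\<forall>i. \<forall>s\<in>S i. s \<le> x$i \<longleftrightarrow> s \<le> y$i) \<longrightarrow> \<sigma> x = \<sigma> y"
    using assms(2) by (metis add_pos_pos zero_less_one)
  define sig where "sig x = (\<lambda>i. {s\<in>S i. s \<le> x$i})" for x :: "real^'n"
  define g where "g s = \<sigma> (SOME x. x \<in> cube q \<and> sig x = s)" for s
  have fin1: "finite (sig ` cube q)"
  proof (rule finite_subset)
    show "sig ` cube q \<subseteq> Pi\<^sub>E UNIV (\<lambda>i. Pow (S i))" by (auto simp: sig_def)
    show "finite (Pi\<^sub>E UNIV (\<lambda>i. Pow (S i)))" using S(1) by (intro finite_PiE) auto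
  qed
  have eq: "\<sigma> ` cube q \<subseteq> g ` sig ` cube q"
  proof
    fix e assume "e \<in> \<sigma> ` cube q"
    then obtain x where x: "x \<in> cube q" "e = \<sigma> x" by auto
    define x' where "x' = (SOME x'. x' \<in> cube q \<and> sig x' = sig x)"
    have x': "x' \<in> cube q \<and> sig x' = sig x" unfolding x'_def by (rule someI[of _ x]) (use x in auto)
    have "\<forall>i. -(q+1) \<le> x$i \<and> x$i < q+1 \<and> -(q+1) \<le> x'$i \<and> x'$i < q+1"
      using x(1) x' by (auto simp: cube_iff) (smt (verit))+
    moreover have "\<forall>i. \<forall>s\<in>S i. s \<le> x$i \<longleftrightarrow> s \<le> x'$i"
      using x' by (auto simp: sig_def fun_eq_iff set_eq_iff)
    ultimately have "\<sigma> x = \<sigma> x'" using S(2) by blast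
    hence "e = g (sig x)" using x unfolding g_def x'_def by simp
    thus "e \<in> g ` sig ` cube q" using x by auto
  qed
  have fin2: "finite (\<sigma> ` cube q)" by (rule finite_subset[OF eq]) (use fin1 in auto)
  have "finvals q \<sigma> = (\<lambda>n. ereal (of_int n)) -` (\<sigma> ` cube q)"
    by (auto simp: finvals_def) (metis imageI)
  thus ?thesis using fin2 by (auto intro: finite_vimageI simp: inj_on_def)
qed


lemma growth:
  fixes \<sigma> :: "real^'n \<Rightarrow> ereal" and b :: "real^'n"
  assumes "\<sigma> \<in> StateSpace"
  shows "\<exists>M\<ge>1. \<forall>y. y \<le> b \<and> linf y \<ge> M \<longrightarrow>
           \<sigma> y < ereal (- (linf y powr (real CARD('n) / (real CARD('n) + 1))))"
proof -
  let ?f = "\<lambda>y. ereal (linf y powr (- real CARD('n) / (real CARD('n) + 1))) * \<sigma> y"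
  have "((\<lambda>M. SUP y\<in>{y. y \<le> b \<and> linf y \<ge> M}. ?f y) \<longlongrightarrow> -\<infinity>) at_top"
    using assms unfolding StateSpace_def by blast
  hence "eventually (\<lambda>M. (SUP y\<in>{y. y \<le> b \<and> linf y \<ge> M}. ?f y) < ereal (-1)) at_top"
    unfolding tendsto_MInfty by blast
  then obtain M0 where M0: "\<And>M. M \<ge> M0 \<Longrightarrow> (SUP y\<in>{y. y \<le> b \<and> linf y \<ge> M}. ?f y) < ereal (-1)"
    unfolding eventually_at_top_linorder by blast
  define M where "M = max M0 1"
  have "\<sigma> y < ereal (- (linf y powr (real CARD('n) / (real CARD('n) + 1))))"
    if y: "y \<le> b" "linf y \<ge> M" for y
  proof -
    have "?f y \<le> (SUP y\<in>{y. y \<le> b \<and> linf y \<ge> M}. ?f y)" using y by (intro SUP_upper) auto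
    also have "\<dots> < ereal (-1)" using M0[of M] by (simp add: M_def)
    finally have lt: "?f y < ereal (-1)" .
    define l where "l = linf y"
    have l1: "l \<ge> 1" using y by (simp add: M_def l_def)
    define e where "e = real CARD('n) / (real CARD('n) + 1)"
    have me: "- real CARD('n) / (real CARD('n) + 1) = - e" by (simp add: e_def)
    have ae: "linf y powr (- real CARD('n) / (real CARD('n) + 1)) = 1 / l powr e"
      unfolding me l_def by (rule powr_minus_divide)
    have lpos: "l powr e > 0" using l1 by simp
    show ?thesis
    proof (cases "\<sigma> y")
      case (real r)
      have "(1 / l powr e) * r < -1" using lt ae real by simp
      hence "r < - (l powr e)" using lpos by (simp add: divide_less_eq)
      thus ?thesis using real by (simp add: l_def e_def)
    next
      case PInf
      hence "?f y = \<infinity>" using ae lpos by simp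
      thus ?thesis using lt by simp
    next
      case MInf thus ?thesis by simp
    qed
  qed
  moreover have "M \<ge> 1" by (simp add: M_def)
  ultimately show ?thesis by blast
qed


lemma abs_le_linf: "\<bar>x$i\<bar> \<le> linf x"
  unfolding linf_def by (rule Max_ge) auto

lemma Sh_bound:
  fixes \<sigma> :: "real^'n \<Rightarrow> ereal" and b x :: "real^'n" and h :: int
  assumes M1: "M \<ge> 1"
    and G: "\<forall>y. y \<le> b \<and> linf y \<ge> M \<longrightarrow> \<sigma> y < ereal (- (linf y powr (real CARD('n) / (real CARD('n) + 1))))"
    and x: "x \<le> b" "\<sigma> x \<ge> ereal (of_int h)"
  shows "linf x \<le> M + \<bar>real_of_int h\<bar> powr ((real CARD('n) + 1) / real CARD('n))"
proof (cases "linf x < M")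
  case True thus ?thesis by (smt (verit) powr_ge_zero)
next
  case False
  define l where "l = linf x"
  define a where "a = real CARD('n) / (real CARD('n) + 1)"
  define be where "be = (real CARD('n) + 1) / real CARD('n)"
  have l1: "l \<ge> 1" using False M1 by (simp add: l_def)
  have "ereal (of_int h) < ereal (- (l powr a))" using G x False unfolding l_def a_def
    by (meson linorder_not_less order_le_less_trans)
  hence "l powr a < \<bar>real_of_int h\<bar>" by simp
  hence "(l powr a) powr be \<le> \<bar>real_of_int h\<bar> powr be"
    by (intro powr_mono2) (auto simp: be_def)
  moreover have "(l powr a) powr be = l"
  proof -
    have "a * be = 1" by (simp add: a_def be_def)
    thus ?thesis using l1 by (simp add: powr_powr)
  qed
  ultimately show ?thesis using M1 by (simp add: l_def be_def)
qed

lemma ybh_props: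
  fixes \<sigma> :: "real^'n \<Rightarrow> ereal" and b :: "real^'n" and h :: int and R :: real
  assumes lb: "\<And>x. x \<le> b \<Longrightarrow> \<sigma> x \<ge> ereal (of_int h) \<Longrightarrow> \<forall>i. x$i \<ge> -R"
    and bR: "\<forall>i. b$i \<ge> -R"
  shows "ybh b h \<sigma> \<le> b" "\<And>x. x \<le> b \<Longrightarrow> \<sigma> x \<ge> ereal (of_int h) \<Longrightarrow> ybh b h \<sigma> \<le> x"
    "\<forall>i. ybh b h \<sigma> $ i \<ge> -R"
proof -
  define S where "S = {x. x \<le> b \<and> \<sigma> x \<ge> ereal (of_int h)}"
  have P: "ybh b h \<sigma> \<le> b \<and> (\<forall>x\<in>S. ybh b h \<sigma> \<le> x) \<and> (\<forall>i. ybh b h \<sigma> $ i \<ge> -R)"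
  proof (cases "S = {}")
    case True
    hence "ybh b h \<sigma> = b" unfolding ybh_def S_def Let_def by simp
    thus ?thesis using True bR by simp
  next
    case False
    define w where "w = (\<chi> i. Inf ((\<lambda>x. x$i) ` S))"
    have bdd: "bdd_below ((\<lambda>x. x$i) ` S)" for i
      using lb unfolding S_def bdd_below_def by (intro exI[of _ "-R"]) auto
    have wle: "w \<le> x" if "x \<in> S" for x
      unfolding less_eq_vec_def w_def using that bdd by (auto intro: cInf_lower)
    have wR: "w $ i \<ge> -R" for i
      unfolding w_def using False lb by (auto intro!: cInf_greatest simp: S_def)
    obtain x0 where x0: "x0 \<in> S" using False by auto
    have wb: "w \<le> b" using wle[OF x0] x0 by (auto simp: S_def intro: order_trans)
    have "(GREATEST y. y \<le> b \<and> (\<forall>x\<in>S. y \<le> x \<and> x \<le> b)) = w"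
    proof (rule Greatest_equality)
      show "w \<le> b \<and> (\<forall>x\<in>S. w \<le> x \<and> x \<le> b)" using wb wle by (auto simp: S_def)
    next
      fix y assume y: "y \<le> b \<and> (\<forall>x\<in>S. y \<le> x \<and> x \<le> b)"
      show "y \<le> w" unfolding less_eq_vec_def w_def
        using y False by (auto intro!: cInf_greatest simp: less_eq_vec_def)
    qed
    moreover have "ybh b h \<sigma> = (if S = {} then b else (GREATEST y. y \<le> b \<and> (\<forall>x\<in>S. y \<le> x \<and> x \<le> b)))"
      unfolding ybh_def Let_def S_def by simp
    ultimately have "ybh b h \<sigma> = w" using False by simp
    thus ?thesis using wb wle wR by simp
  qed
  show "ybh b h \<sigma> \<le> b" using P by simp
  show "\<And>x. x \<le> b \<Longrightarrow> \<sigma> x \<ge> ereal (of_int h) \<Longrightarrow> ybh b h \<sigma> \<le> x" using P by (simp add: S_def)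
  show "\<forall>i. ybh b h \<sigma> $ i \<ge> -R" using P by simp
qed


lemma ybh_good:
  fixes \<sigma> :: "real^'n \<Rightarrow> ereal"
  assumes "\<sigma> \<in> StateSpace" "q > 0"
  shows "\<exists>M\<ge>1. \<forall>h::int. ybh (q *\<^sub>R ones) h \<sigma> \<le> q *\<^sub>R ones \<and>
     (\<forall>x. x \<le> q *\<^sub>R ones \<and> \<sigma> x \<ge> ereal (of_int h) \<longrightarrow> ybh (q *\<^sub>R ones) h \<sigma> \<le> x) \<and>
     (\<forall>i. ybh (q *\<^sub>R ones) h \<sigma> $ i \<ge> - (M + \<bar>real_of_int h\<bar> powr ((real CARD('n) + 1) / real CARD('n))))"
proof -
  obtain M where M: "M \<ge> 1" "\<forall>y. y \<le> q *\<^sub>R ones \<and> linf y \<ge> M \<longrightarrow>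
           \<sigma> y < ereal (- (linf y powr (real CARD('n) / (real CARD('n) + 1))))"
    using growth[OF assms(1), of "q *\<^sub>R ones"] by blast
  have "ybh (q *\<^sub>R ones) h \<sigma> \<le> q *\<^sub>R ones \<and>
     (\<forall>x. x \<le> q *\<^sub>R ones \<and> \<sigma> x \<ge> ereal (of_int h) \<longrightarrow> ybh (q *\<^sub>R ones) h \<sigma> \<le> x) \<and>
     (\<forall>i. ybh (q *\<^sub>R ones) h \<sigma> $ i \<ge> - (M + \<bar>real_of_int h\<bar> powr ((real CARD('n) + 1) / real CARD('n))))" for h :: int
  proof -
    let ?R = "M + \<bar>real_of_int h\<bar> powr ((real CARD('n) + 1) / real CARD('n))"
    have lb: "\<forall>i. x$i \<ge> - ?R" if "x \<le> q *\<^sub>R ones" "\<sigma> x \<ge> ereal (of_int h)" for x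
    proof
      fix i
      have "\<bar>x$i\<bar> \<le> ?R" using abs_le_linf[of x i] Sh_bound[OF M(1) M(2) that] by linarith
      thus "x$i \<ge> - ?R" by linarith
    qed
    have bR: "\<forall>i. (q *\<^sub>R ones) $ i \<ge> - ?R" using assms(2) M(1)
      by (auto simp: ones_def) (smt (verit) powr_ge_zero)
    show ?thesis using ybh_props[OF lb bR] by blast
  qed
  thus ?thesis using M(1) by blast
qed

definition lterm :: "real \<Rightarrow> int \<Rightarrow> (real^'n \<Rightarrow> ereal) \<Rightarrow> int \<Rightarrow> real" where
  "lterm q k \<sigma> h = vfact (q *\<^sub>R ones - ybh (q *\<^sub>R ones) h \<sigma>) * (real_of_int (k - h)) powr (- (real CARD('n) + 1))"

lemma lam_eq: "lam q k \<sigma> = (SUP h\<in>{h::int. h \<le> k - 2}. lterm q k \<sigma> h)"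
  by (simp add: lam_def lterm_def)

lemma lam_facts:
  fixes \<sigma> :: "real^'n \<Rightarrow> ereal"
  assumes "\<sigma> \<in> StateSpace" "q > 0"
  shows "\<And>h. h \<le> k - 2 \<Longrightarrow> lterm q k \<sigma> h \<le> lam q k \<sigma>" "lam q k \<sigma> \<ge> 0"
proof -
  obtain M where M: "M \<ge> 1" "\<And>h::int. ybh (q *\<^sub>R ones) h \<sigma> \<le> q *\<^sub>R ones"
     "\<And>h::int. \<forall>i. ybh (q *\<^sub>R ones) h \<sigma> $ i \<ge> - (M + \<bar>real_of_int h\<bar> powr ((real CARD('n) + 1) / real CARD('n)))"
    using ybh_good[OF assms] by blast
  define d where "d = real CARD('n)"
  define be where "be = (d + 1) / d"
  have d0: "d > 0" by (simp add: d_def)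
  have be0: "be \<ge> 0" using d0 by (simp add: be_def)
  define D where "D = q + M + (1 + \<bar>real_of_int k\<bar>) powr be"
  have nonneg: "lterm q k \<sigma> h \<ge> 0" for h
  proof -
    have "\<forall>i. (q *\<^sub>R ones - ybh (q *\<^sub>R ones) h \<sigma>) $ i \<ge> 0" using M(2)[of h] by (auto simp: less_eq_vec_def)
    hence "vfact (q *\<^sub>R ones - ybh (q *\<^sub>R ones) h \<sigma>) \<ge> 0" unfolding vfact_def by (intro prod_nonneg) auto
    thus ?thesis unfolding lterm_def by simp
  qed
  have bnd: "lterm q k \<sigma> h \<le> D ^ CARD('n)" if h: "h \<le> k - 2" for h
  proof -
    define n where "n = real_of_int (k - h)"
    have n2: "n \<ge> 2" using h by (simp add: n_def)
    have nb1: "n powr be \<ge> 1" using n2 be0 by (intro ge_one_powr_ge_zero) auto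
    have habs: "\<bar>real_of_int h\<bar> \<le> (1 + \<bar>real_of_int k\<bar>) * n"
    proof -
      have "\<bar>real_of_int h\<bar> \<le> \<bar>real_of_int k\<bar> + n" using h by (simp add: n_def abs_if)
      also have "\<dots> \<le> \<bar>real_of_int k\<bar> * n + n" using n2 by (intro add_right_mono) (simp add: mult_le_cancel_left1)
      finally show ?thesis by (simp add: algebra_simps)
    qed
    have hp: "\<bar>real_of_int h\<bar> powr be \<le> (1 + \<bar>real_of_int k\<bar>) powr be * n powr be"
    proof -
      have "\<bar>real_of_int h\<bar> powr be \<le> ((1 + \<bar>real_of_int k\<bar>) * n) powr be"
        by (intro powr_mono2 be0 habs) auto
      also have "\<dots> = (1 + \<bar>real_of_int k\<bar>) powr be * n powr be" by (rule powr_mult)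
      finally show ?thesis .
    qed
    have qM: "q + M \<le> (q + M) * n powr be" using nb1 assms(2) M(1) by (simp add: mult_le_cancel_left1)
    have fac: "0 \<le> (q *\<^sub>R ones - ybh (q *\<^sub>R ones) h \<sigma>) $ i \<and> (q *\<^sub>R ones - ybh (q *\<^sub>R ones) h \<sigma>) $ i \<le> D * n powr be" for i
    proof
      show "0 \<le> (q *\<^sub>R ones - ybh (q *\<^sub>R ones) h \<sigma>) $ i" using M(2)[of h] by (auto simp: less_eq_vec_def)
      have "(q *\<^sub>R ones - ybh (q *\<^sub>R ones) h \<sigma>) $ i \<le> q + (M + \<bar>real_of_int h\<bar> powr be)"
        using M(3)[of h] by (simp add: ones_def be_def d_def) (smt (verit))
      also have "\<dots> \<le> (q + M) * n powr be + (1 + \<bar>real_of_int k\<bar>) powr be * n powr be"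
        using qM hp by linarith
      also have "\<dots> = D * n powr be" by (simp add: D_def algebra_simps)
      finally show "(q *\<^sub>R ones - ybh (q *\<^sub>R ones) h \<sigma>) $ i \<le> D * n powr be" .
    qed
    have "vfact (q *\<^sub>R ones - ybh (q *\<^sub>R ones) h \<sigma>) \<le> (\<Prod>i\<in>(UNIV::'n set). D * n powr be)"
      unfolding vfact_def by (intro prod_mono fac)
    also have "\<dots> = (D * n powr be) ^ CARD('n)" by simp
    also have "\<dots> = D ^ CARD('n) * n powr (d + 1)"
    proof -
      have "(n powr be) ^ CARD('n) = n powr (be * d)"
        using n2 by (simp add: powr_realpow[symmetric] powr_powr d_def)
      also have "be * d = d + 1" using d0 by (simp add: be_def)
      finally show ?thesis by (simp add: power_mult_distrib)
    qed
    finally have vf: "vfact (q *\<^sub>R ones - ybh (q *\<^sub>R ones) h \<sigma>) \<le> D ^ CARD('n) * n powr (d + 1)" .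
    have "lterm q k \<sigma> h = vfact (q *\<^sub>R ones - ybh (q *\<^sub>R ones) h \<sigma>) * n powr (- (d + 1))"
      by (simp add: lterm_def n_def d_def)
    also have "\<dots> \<le> D ^ CARD('n) * n powr (d + 1) * n powr (- (d + 1))"
      by (intro mult_right_mono vf) simp
    also have "\<dots> = D ^ CARD('n)"
      using n2 by (simp add: mult.assoc powr_add[symmetric])
    finally show ?thesis .
  qed
  have bdd: "bdd_above (lterm q k \<sigma> ` {h. h \<le> k - 2})"
    using bnd by (intro bdd_aboveI[of _ "D ^ CARD('n)"]) auto
  show up: "\<And>h. h \<le> k - 2 \<Longrightarrow> lterm q k \<sigma> h \<le> lam q k \<sigma>"
    unfolding lam_eq by (rule cSUP_upper[OF _ bdd]) simp
  show "lam q k \<sigma> \<ge> 0" using up[of "k-2"] nonneg[of "k-2"] by simp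
qed


lemma fact_exp: "real n ^ n \<le> exp 1 ^ n * fact n"
proof (induction n)
  case 0 thus ?case by simp
next
  case (Suc n)
  have a: "(real n + 1) ^ n \<le> exp 1 * real n ^ n"
  proof (cases "n = 0")
    case True thus ?thesis by simp
  next
    case False
    have "(1 + 1 / real n) ^ n \<le> exp 1" using False by (intro exp_ge_one_plus_x_over_n_power_n) auto
    moreover have "(real n + 1) ^ n = real n ^ n * (1 + 1 / real n) ^ n"
      using False by (simp add: power_mult_distrib[symmetric] field_simps)
    ultimately have "(real n + 1) ^ n \<le> real n ^ n * exp 1" by (metis mult_left_mono zero_le_power of_nat_0_le_iff)
    thus ?thesis by (simp add: mult.commute)
  qed
  have "real (Suc n) ^ Suc n = (real n + 1) * (real n + 1) ^ n" by (simp add: add.commute)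
  also have "\<dots> \<le> (real n + 1) * (exp 1 * real n ^ n)" using a by (intro mult_left_mono) auto
  also have "\<dots> \<le> (real n + 1) * (exp 1 * (exp 1 ^ n * fact n))"
    using Suc.IH by (intro mult_left_mono) auto
  also have "\<dots> = exp 1 ^ Suc n * fact (Suc n)" by (simp add: algebra_simps)
  finally show ?case .
qed


lemma chain_term_bound:
  fixes V t lam :: real and n d :: nat
  assumes V: "V \<ge> 0" and t: "t \<ge> 0" and n: "n \<ge> 1"
    and lam: "V * real n powr (- (real d + 1)) \<le> lam"
  shows "(V * t) ^ n / fact n ^ (d + 1) \<le> (lam * exp (real d + 1) * t) ^ n"
proof -
  define E where "E = exp (1::real)"
  have E0: "E > 0" by (simp add: E_def)
  have n0: "real n > 0" using n by simp
  have eE: "exp (real d + 1) = E ^ (d + 1)"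
    unfolding E_def using exp_of_nat_mult[of "d+1" "1::real"] by (simp add: add.commute)
  have pw0: "real n powr (real d + 1) = real n ^ (d + 1)"
    using powr_realpow[OF n0, of "d+1"] by (simp add: add.commute)
  have pw: "real n powr (- (real d + 1)) = 1 / real n ^ (d + 1)"
    by (simp only: powr_minus_divide pw0)
  have Vn: "V / real n ^ (d + 1) \<le> lam" using lam pw by simp
  have f1: "real n ^ n / E ^ n \<le> fact n" using fact_exp[of n] E0 by (simp add: E_def divide_le_eq mult.commute)
  have f2: "(real n ^ n / E ^ n) ^ (d + 1) \<le> fact n ^ (d + 1)"
    by (intro power_mono f1) (use E0 in simp)
  have f3: "(real n ^ n / E ^ n) ^ (d + 1) = (real n ^ (d + 1) / E ^ (d + 1)) ^ n"
  proof -
    have "(real n ^ n / E ^ n) ^ (d + 1) = (real n / E) ^ (n * (d + 1))" by (simp only: power_mult power_divide)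
    also have "\<dots> = (real n / E) ^ ((d + 1) * n)" by (simp only: mult.commute)
    also have "\<dots> = (real n ^ (d + 1) / E ^ (d + 1)) ^ n" by (simp only: power_mult power_divide)
    finally show ?thesis .
  qed
  have pos: "(real n ^ (d + 1) / E ^ (d + 1)) ^ n > 0" using n0 E0 by simp
  have "(V * t) ^ n / fact n ^ (d + 1) \<le> (V * t) ^ n / (real n ^ (d + 1) / E ^ (d + 1)) ^ n"
    using f2 f3 pos V t by (intro divide_left_mono) (auto intro!: zero_le_power mult_nonneg_nonneg)
  also have "\<dots> = (V / real n ^ (d + 1) * E ^ (d + 1) * t) ^ n"
    by (simp add: power_divide[symmetric] field_simps)
  also have "\<dots> \<le> (lam * E ^ (d + 1) * t) ^ n"
    using Vn V t E0 n0 by (intro power_mono mult_right_mono) auto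
  finally show ?thesis by (simp add: eE)
qed


lemma Sup_enat_ge:
  fixes S :: "enat set"
  assumes "Sup S \<ge> enat n" "n \<ge> 1"
  shows "\<exists>s\<in>S. s \<ge> enat n"
proof (rule ccontr)
  assume a: "\<not> ?thesis"
  have "s \<le> enat (n - 1)" if s: "s \<in> S" for s
  proof (cases s)
    case (enat m)
    hence "m < n" using a s by auto
    thus ?thesis using enat by simp
  next
    case infinity
    thus ?thesis using a s by auto
  qed
  hence "Sup S \<le> enat (n - 1)" by (intro Sup_least) auto
  hence "enat n \<le> enat (n - 1)" using assms(1) by (rule order_trans[rotated])
  thus False using assms(2) by simp
qed

lemma geom_ennreal:
  fixes r :: real
  assumes "0 \<le> r" "r \<le> 1/2"
  shows "(\<Sum>j. ennreal (r ^ (j + 2))) \<le> ennreal (2 * r\<^sup>2)"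
proof -
  have "(\<lambda>j. r\<^sup>2 * r ^ j) sums (r\<^sup>2 * (1 / (1 - r)))"
    by (intro sums_mult geometric_sums) (use assms in auto)
  moreover have "(\<lambda>j. r ^ (j + 2)) = (\<lambda>j. r\<^sup>2 * r ^ j)" by (simp add: fun_eq_iff power_add power2_eq_square mult_ac)
  ultimately have s: "(\<lambda>j. r ^ (j + 2)) sums (r\<^sup>2 / (1 - r))" by simp
  have "(\<Sum>j. ennreal (r ^ (j + 2))) = ennreal (r\<^sup>2 / (1 - r))"
    by (rule suminf_ennreal_eq[OF _ s]) (use assms in simp)
  also have "r\<^sup>2 / (1 - r) \<le> r\<^sup>2 / (1/2)"
    using assms by (intro divide_left_mono) auto
  hence "r\<^sup>2 / (1 - r) \<le> 2 * r\<^sup>2" by simp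
  hence "ennreal (r\<^sup>2 / (1 - r)) \<le> ennreal (2 * r\<^sup>2)" by (rule ennreal_leI)
  finally show ?thesis .
qed

lemma Bsem_empty:
  assumes "\<not> (\<forall>j. L j > 0)" "n > 0"
  shows "\<not> Bsem Pts N lo L n \<omega>"
proof
  assume "Bsem Pts N lo L n \<omega>"
  then obtain C where C: "finite C" "C \<subseteq> Pts \<omega> \<inter> boxL lo L" "card C = n" unfolding Bsem_def by blast
  have "C \<noteq> {}" using C(3) assms(2) by auto
  then obtain p where "p \<in> C" by blast
  hence "p \<in> boxL lo L" using C by auto
  hence "\<forall>j. lo j < crd j p \<and> crd j p \<le> lo j + L j" by (simp add: boxL_def)
  hence "\<forall>j. L j > 0"
  proof (intro allI)
    fix j assume h: "\<forall>j. lo j < crd j p \<and> crd j p \<le> lo j + L j"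
    from h[rule_format, of j] show "L j > 0" by linarith
  qed
  thus False using assms(1) by simp
qed


lemma slt_crd: "slt a b \<Longrightarrow> crd j a < crd j b"
  by (cases j) (auto simp: slt_def vlt_def crd_def)

lemma prod_L_eq:
  fixes y :: "real^'n" and q t :: real and n :: nat
  shows "(\<Prod>j\<in>UNIV. (case j of Some i \<Rightarrow> q - y$i | None \<Rightarrow> t) ^ n / fact n) =
         (vfact (q *\<^sub>R ones - y) * t) ^ n / fact n ^ (CARD('n) + 1)"
proof -
  have "(\<Prod>j\<in>UNIV. (case j of Some i \<Rightarrow> q - y$i | None \<Rightarrow> t) ^ n / fact n) =
        (\<Prod>i\<in>UNIV. (q - y$i) ^ n / fact n) * (t ^ n / fact n)"
    by (simp add: prod_option_UNIV)
  also have "(\<Prod>i\<in>UNIV. (q - y$i) ^ n / fact n) = (\<Prod>i\<in>UNIV. (q - y$i)) ^ n / fact n ^ CARD('n)"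
    by (simp add: prod_dividef prod_power_distrib prod_constant)
  also have "(\<Prod>i\<in>UNIV. (q - y$i)) = vfact (q *\<^sub>R ones - y)"
    by (simp add: vfact_def ones_def)
  finally show ?thesis by (simp add: power_mult_distrib)
qed

theorem lemma7p3:
  fixes M :: "'w measure" and Pts :: "'w \<Rightarrow> ((real^'n) \<times> real) set"
    and \<sigma> :: "real^'n \<Rightarrow> ereal" and q t :: real
  assumes "CARD('n) \<ge> 2"
    and "poisson_pp M Pts"
    and "\<sigma> \<in> StateSpace"
    and "q > 0"
    and "0 < t"
    and "2 * exp (real CARD('n) + 1) * psiK q \<sigma> * t < 1"
  shows "\<exists>E\<in>sets M. {\<omega>\<in>space M. eventG q \<sigma> t (Pts \<omega>)} \<subseteq> E \<and>
           measure M E \<le> 2 * exp (2 * (real CARD('n) + 1)) * (psiK q \<sigma>)\<^sup>2 * t\<^sup>2"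
proof -
  note pp = assms(2)
  have ps: "prob_space M" using pp by (simp add: poisson_pp_def)
  interpret prob_space M by (rule ps)
  define bnd where "bnd = 2 * exp (2 * (real CARD('n) + 1)) * (psiK q \<sigma>)\<^sup>2 * t\<^sup>2"
  have bnd0: "bnd \<ge> 0" by (simp add: bnd_def)
  show ?thesis
  proof (cases "finvals q \<sigma> = {}")
    case True
    have "{\<omega>\<in>space M. eventG q \<sigma> t (Pts \<omega>)} = {}"
    proof (rule ccontr)
      assume "{\<omega>\<in>space M. eventG q \<sigma> t (Pts \<omega>)} \<noteq> {}"
      then obtain \<omega> where "eventG q \<sigma> t (Pts \<omega>)" by auto
      then obtain x b where "x \<in> cube q" "\<sigma> x = ereal (of_int b)" unfolding eventG_def by blast
      hence "b \<in> finvals q \<sigma>" by (auto simp: finvals_def)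
      thus False using True by simp
    qed
    thus ?thesis using bnd0 by (intro bexI[of _ "{}"]) (auto simp: bnd_def)
  next
    case False
    have fin: "finite (finvals q \<sigma>)" by (rule finite_finvals[OF assms(3,4)])
    define I where "I = Min (finvals q \<sigma>)"
    define J where "J = Max (finvals q \<sigma>)"
    define Kr where "Kr = {I + 1 .. J + 1}"
    have psi: "psiK q \<sigma> = sqrt (\<Sum>k\<in>Kr. (lam q k \<sigma>)\<^sup>2)"
      using False by (simp add: psiK_def Kr_def I_def J_def)
    have psi2: "(psiK q \<sigma>)\<^sup>2 = (\<Sum>k\<in>Kr. (lam q k \<sigma>)\<^sup>2)" using psi by (simp add: sum_nonneg)
    obtain Mb where Mb: "\<forall>h::int. ybh (q *\<^sub>R ones) h \<sigma> \<le> q *\<^sub>R ones \<and>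
       (\<forall>x. x \<le> q *\<^sub>R ones \<and> \<sigma> x \<ge> ereal (of_int h) \<longrightarrow> ybh (q *\<^sub>R ones) h \<sigma> \<le> x)"
      using ybh_good[OF assms(3,4)] by blast
    define r where "r k = lam q k \<sigma> * exp (real CARD('n) + 1) * t" for k
    have r0: "r k \<ge> 0" for k using lam_facts(2)[OF assms(3,4), of k] assms(5) by (simp add: r_def)
    have rle: "r k \<le> 1/2" if k: "k \<in> Kr" for k
    proof -
      have "(lam q k \<sigma>)\<^sup>2 \<le> (\<Sum>k\<in>Kr. (lam q k \<sigma>)\<^sup>2)" using k by (intro member_le_sum) (auto simp: Kr_def)
      hence "lam q k \<sigma> \<le> psiK q \<sigma>" unfolding psi by (rule real_le_rsqrt)
      hence "r k \<le> psiK q \<sigma> * exp (real CARD('n) + 1) * t" unfolding r_def using assms(5)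
        by (intro mult_right_mono) auto
      thus ?thesis using assms(6) by (simp add: mult_ac)
    qed
    define lo where "lo a j = (case j of Some i \<Rightarrow> ybh (q *\<^sub>R ones) a \<sigma> $ i | None \<Rightarrow> 0)" for a :: int and j :: "'n option"
    define Lf where "Lf a j = (case j of Some i \<Rightarrow> q - ybh (q *\<^sub>R ones) a \<sigma> $ i | None \<Rightarrow> t)" for a :: int and j :: "'n option"
    define Ev where "Ev k a = (\<Union>m. {\<omega>\<in>space M. Bsem Pts (2^m) (lo a) (Lf a) (nat (k - a)) \<omega>})" for k a :: int
    have Evb: "Ev k a \<in> sets M \<and> measure M (Ev k a) \<le> r k ^ nat (k - a)" if ka: "a \<le> k - 2" for k a
    proof -
      have n0: "nat (k - a) > 0" using ka by simp
      have lo0: "lo a None \<ge> 0" by (simp add: lo_def)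
      show ?thesis
      proof (cases "\<forall>j. Lf a j > 0")
        case True
        have U: "Ev k a \<in> sets M \<and> measure M (Ev k a) \<le> (\<Prod>j\<in>UNIV. Lf a j ^ nat (k - a) / fact (nat (k - a)))"
          unfolding Ev_def
          using union_prob[where M=M and Pts=Pts and L="Lf a" and n="nat (k - a)" and lo="lo a"] pp True n0 lo0
          by blast
        have "(\<Prod>j\<in>UNIV. Lf a j ^ nat (k - a) / fact (nat (k - a))) =
            (vfact (q *\<^sub>R ones - ybh (q *\<^sub>R ones) a \<sigma>) * t) ^ nat (k - a) / fact (nat (k - a)) ^ (CARD('n) + 1)"
          unfolding Lf_def by (rule prod_L_eq)
        also have "\<dots> \<le> r k ^ nat (k - a)"
        proof -
          have "\<forall>i. (q *\<^sub>R ones - ybh (q *\<^sub>R ones) a \<sigma>) $ i \<ge> 0"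
            using Mb by (auto simp: less_eq_vec_def)
          hence V0: "vfact (q *\<^sub>R ones - ybh (q *\<^sub>R ones) a \<sigma>) \<ge> 0"
            unfolding vfact_def by (intro prod_nonneg) auto
          have lt: "lterm q k \<sigma> a \<le> lam q k \<sigma>" by (rule lam_facts(1)[OF assms(3,4) ka])
          have "vfact (q *\<^sub>R ones - ybh (q *\<^sub>R ones) a \<sigma>) * real (nat (k - a)) powr (- (real CARD('n) + 1)) \<le> lam q k \<sigma>"
            using lt ka by (simp add: lterm_def)
          from chain_term_bound[OF V0 _ _ this] show ?thesis using assms(5) ka by (simp add: r_def)
        qed
        finally show ?thesis using U by linarith
      next
        case False
        have "\<not> Bsem Pts (2^m) (lo a) (Lf a) (nat (k - a)) \<omega>" for m \<omega> by (rule Bsem_empty[OF False n0])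
        hence "Ev k a = {}" unfolding Ev_def by blast
        thus ?thesis using r0[of k] by simp
      qed
    qed
    define E where "E = (\<Union>k\<in>Kr. \<Union>j::nat. Ev k (k - 2 - int j))"
    have Evs: "Ev k (k - 2 - int j) \<in> sets M" for k j using Evb[of "k - 2 - int j" k] by simp
    have Es: "E \<in> sets M" unfolding E_def using Evs by (intro sets.finite_UN sets.countable_UN) (auto simp: Kr_def)
    have sub: "{\<omega>\<in>space M. eventG q \<sigma> t (Pts \<omega>)} \<subseteq> E"
    proof
      fix \<omega> assume "\<omega> \<in> {\<omega>\<in>space M. eventG q \<sigma> t (Pts \<omega>)}"
      hence om: "\<omega> \<in> space M" and ev: "eventG q \<sigma> t (Pts \<omega>)" by auto
      obtain x y a b where x: "x \<in> cube q" and vy: "vlt y x" and sy: "\<sigma> y = ereal (of_int a)"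
        and sx: "\<sigma> x = ereal (of_int b)" and ab: "a \<le> b - 1"
        and H: "Hlp (Pts \<omega>) y x t \<ge> enat (nat (b + 1 - a))"
        using ev unfolding eventG_def by blast
      define k where "k = b + 1"
      define n where "n = nat (k - a)"
      have bf: "b \<in> finvals q \<sigma>" using x sx by (auto simp: finvals_def)
      have kK: "k \<in> Kr" using bf fin by (auto simp: Kr_def I_def J_def k_def)
      have ka: "a \<le> k - 2" using ab by (simp add: k_def)
      have n2: "n \<ge> 2" using ka by (simp add: n_def)
      have Sg: "Sup {enat (card C) | C. finite C \<and> C \<subseteq> Pts \<omega> \<inter> {(\<eta>, s). vlt y \<eta> \<and> \<eta> \<le> x \<and> 0 < s \<and> s \<le> t} \<and>
          (\<forall>a\<in>C. \<forall>b\<in>C. a \<noteq> b \<longrightarrow> slt a b \<or> slt b a)} \<ge> enat n"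
        using H unfolding Hlp_def n_def k_def by simp
      have "\<exists>s\<in>{enat (card C) | C. finite C \<and> C \<subseteq> Pts \<omega> \<inter> {(\<eta>, s). vlt y \<eta> \<and> \<eta> \<le> x \<and> 0 < s \<and> s \<le> t} \<and>
          (\<forall>a\<in>C. \<forall>b\<in>C. a \<noteq> b \<longrightarrow> slt a b \<or> slt b a)}. s \<ge> enat n"
        using n2 by (intro Sup_enat_ge[OF Sg]) simp
      then obtain C where C: "finite C"
        "C \<subseteq> Pts \<omega> \<inter> {(\<eta>, s). vlt y \<eta> \<and> \<eta> \<le> x \<and> 0 < s \<and> s \<le> t}"
        "\<forall>a\<in>C. \<forall>b\<in>C. a \<noteq> b \<longrightarrow> slt a b \<or> slt b a" "enat n \<le> enat (card C)" by blast
      hence Cn: "card C \<ge> n" by simp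
      obtain C' where C': "C' \<subseteq> C" "card C' = n" "finite C'" using obtain_subset_with_card_n[OF Cn] by blast
      have yx: "y \<le> x" unfolding less_eq_vec_def
      proof
        fix i show "y $ i \<le> x $ i" using vy by (simp add: vlt_def order.strict_implies_order)
      qed
      have xb: "x \<le> q *\<^sub>R ones" using x by (auto simp: cube_iff less_eq_vec_def ones_def)
      have ybq: "y \<le> q *\<^sub>R ones" using yx xb by (rule order.trans)
      have yb: "ybh (q *\<^sub>R ones) a \<sigma> \<le> y" using conjunct2[OF spec[OF Mb, of a]] ybq sy by simp
      have Lpos: "\<forall>j. Lf a j > 0"
      proof
        fix j show "Lf a j > 0"
        proof (cases j)
          case None thus ?thesis using assms(5) by (simp add: Lf_def)
        next
          case (Some i)
          have "ybh (q *\<^sub>R ones) a \<sigma> $ i \<le> y $ i" using yb by (simp add: less_eq_vec_def)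
          moreover have "y $ i < x $ i" using vy by (simp add: vlt_def)
          moreover have "x $ i \<le> q" using x by (simp add: cube_iff)
          ultimately show ?thesis using Some by (simp add: Lf_def)
        qed
      qed
      have Cbox: "C' \<subseteq> Pts \<omega> \<inter> boxL (lo a) (Lf a)"
      proof
        fix p assume pC: "p \<in> C'"
        obtain \<eta> s where ps: "p = (\<eta>, s)" by (cases p)
        have pp': "p \<in> Pts \<omega>" "vlt y \<eta>" "\<eta> \<le> x" "0 < s" "s \<le> t" using pC C'(1) C(2) ps by auto
        have "lo a j < crd j p \<and> crd j p \<le> lo a j + Lf a j" for j
        proof (cases j)
          case None thus ?thesis using pp' by (simp add: lo_def Lf_def crd_def ps)
        next
          case (Some i)
          have "ybh (q *\<^sub>R ones) a \<sigma> $ i \<le> y $ i" using yb by (simp add: less_eq_vec_def)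
          moreover have "y $ i < \<eta> $ i" using pp'(2) by (simp add: vlt_def)
          moreover have "\<eta> $ i \<le> x $ i" using pp'(3) by (simp add: less_eq_vec_def)
          moreover have "x $ i \<le> q" using x by (simp add: cube_iff)
          ultimately show ?thesis using Some by (simp add: lo_def Lf_def crd_def ps)
        qed
        thus "p \<in> Pts \<omega> \<inter> boxL (lo a) (Lf a)" using pp'(1) by (simp add: boxL_def)
      qed
      have ch: "\<forall>p\<in>C'. \<forall>p'\<in>C'. p \<noteq> p' \<longrightarrow> (\<forall>j. crd j p < crd j p') \<or> (\<forall>j. crd j p' < crd j p)"
      proof (intro ballI impI)
        fix p p' assume "p \<in> C'" "p' \<in> C'" "p \<noteq> p'"
        hence "slt p p' \<or> slt p' p" using C(3) C'(1) by blast
        thus "(\<forall>j. crd j p < crd j p') \<or> (\<forall>j. crd j p' < crd j p)" using slt_crd by blast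
      qed
      obtain m where "Bsem Pts (2^m) (lo a) (Lf a) n \<omega>" using Bsem_exists[where L="Lf a" and lo="lo a" and Pts=Pts and \<omega>=\<omega> and C=C' and n=n] Lpos C'(3) Cbox C'(2) ch by blast
      hence "\<omega> \<in> Ev k a" unfolding Ev_def n_def using om by blast
      moreover have "a = k - 2 - int (nat (k - 2 - a))" using ka by simp
      ultimately have "\<omega> \<in> Ev k (k - 2 - int (nat (k - 2 - a)))" by simp
      thus "\<omega> \<in> E" unfolding E_def using kK by blast
    qed
    have EvU: "(\<Union>j::nat. Ev k (k - 2 - int j)) \<in> sets M" for k
      using Evs by (intro sets.countable_UN) auto
    have finKr: "finite Kr" by (simp add: Kr_def)
    have em: "emeasure M E \<le> ennreal bnd"
    proof -
      have img: "(\<lambda>k. \<Union>j::nat. Ev k (k - 2 - int j)) ` Kr \<subseteq> sets M" using EvU by blast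
      have "emeasure M E \<le> (\<Sum>k\<in>Kr. emeasure M (\<Union>j::nat. Ev k (k - 2 - int j)))"
        unfolding E_def by (rule emeasure_subadditive_finite[OF finKr img])
      also have "\<dots> \<le> (\<Sum>k\<in>Kr. ennreal (2 * (r k)\<^sup>2))"
      proof (intro sum_mono)
        fix k assume k: "k \<in> Kr"
        have "emeasure M (\<Union>j::nat. Ev k (k - 2 - int j)) \<le> (\<Sum>j. emeasure M (Ev k (k - 2 - int j)))"
          by (rule emeasure_subadditive_countably) (use Evs in blast)
        also have "\<dots> \<le> (\<Sum>j. ennreal (r k ^ (j + 2)))"
        proof (rule suminf_le[OF _ summableI summableI])
          fix j :: nat
          have "nat (k - (k - 2 - int j)) = j + 2" by simp
          hence "measure M (Ev k (k - 2 - int j)) \<le> r k ^ (j + 2)" using Evb[of "k - 2 - int j" k] by simp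
          thus "emeasure M (Ev k (k - 2 - int j)) \<le> ennreal (r k ^ (j + 2))"
            by (simp add: emeasure_eq_measure ennreal_leI)
        qed
        also have "\<dots> \<le> ennreal (2 * (r k)\<^sup>2)" using r0 rle[OF k] by (intro geom_ennreal)
        finally show "emeasure M (\<Union>j::nat. Ev k (k - 2 - int j)) \<le> ennreal (2 * (r k)\<^sup>2)" .
      qed
      also have "\<dots> = ennreal (\<Sum>k\<in>Kr. 2 * (r k)\<^sup>2)" by (rule sum_ennreal) simp
      also have "(\<Sum>k\<in>Kr. 2 * (r k)\<^sup>2) = bnd"
      proof -
        have e2: "(exp (real CARD('n) + 1))\<^sup>2 = exp (2 * (real CARD('n) + 1))"
        proof -
          have "exp (2 * (real CARD('n) + 1)) = exp (real CARD('n) + 1) * exp (real CARD('n) + 1)"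
            by (simp only: mult_2 exp_add)
          thus ?thesis by (simp only: power2_eq_square)
        qed
        have rk: "2 * (r k)\<^sup>2 = (2 * exp (2 * (real CARD('n) + 1)) * t\<^sup>2) * (lam q k \<sigma>)\<^sup>2" for k
          unfolding r_def e2[symmetric] by algebra
        have "(\<Sum>k\<in>Kr. 2 * (r k)\<^sup>2) = (\<Sum>k\<in>Kr. (2 * exp (2 * (real CARD('n) + 1)) * t\<^sup>2) * (lam q k \<sigma>)\<^sup>2)"
          by (rule sum.cong[OF refl rk])
        also have "\<dots> = (2 * exp (2 * (real CARD('n) + 1)) * t\<^sup>2) * (\<Sum>k\<in>Kr. (lam q k \<sigma>)\<^sup>2)"
          by (rule sum_distrib_left[symmetric])
        also have "\<dots> = bnd" unfolding bnd_def psi2 by algebra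
        finally show ?thesis .
      qed
      finally show ?thesis .
    qed
    have "measure M E \<le> bnd" using em bnd0 by (simp add: emeasure_eq_measure)
    thus ?thesis using Es sub by (auto simp: bnd_def)
  qed
qed


end
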